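(* Let $K$ be a field of characteristic $0$, let $a,r\in K$ with $a\neq 0$ and $r\notin\{-1,1,1-a,-1-a\}$, and put \[ b=\frac{r^2-1}{a},\qquad c=a+b+2r. \] Assume that $ab$, $bc$, $ac$ are pairwise distinct, so that \[ E':\ y^2=(x+ab)(x+bc)(x+ac) \] is an elliptic curve over $K$, and let $P=[0,abc]\in E'(K)$. Then $5P=\mathcal{O}$ if and only if \begin{align*} &(-4 r^2 + 4 r^4)a^4 + (4 r - 20 r^3 + 16 r^5) a^3 + ( -1 + 16 r^2 - 40 r^4 + 24 r^6)a^2\\ &\quad + (-4 r + 24 r^3 - 36 r^5 + 16 r^7)a -4 r^2 + 12 r^4 - 12 r^6 + 4 r^8=0. \end{align*}
   Context: With these definitions $ab+1=r^2$, $ac+1=(a+r)^2$ and $bc+1$ is also a square, so $\{a,b,c\}$ is a Diophantine triple. $\mathcal{O}$ denotes the point at infinity (neutral element) of $E'$. *)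

theory Defs
  imports Main
begin

text \<open>Points of the elliptic curve y^2 = x^3 + a2 x^2 + a4 x + a6 over a field:
  None is the point at infinity O, Some (x,y) an affine point.
  ec_add is the usual chord-and-tangent group law.\<close>

type_synonym 'a ecpt = "('a \<times> 'a) option"

definition on_curve :: "'a::field \<Rightarrow> 'a \<Rightarrow> 'a \<Rightarrow> 'a ecpt \<Rightarrow> bool" where
  "on_curve a2 a4 a6 P = (case P of None \<Rightarrow> True
     | Some (x, y) \<Rightarrow> y^2 = x^3 + a2 * x^2 + a4 * x + a6)"

definition ec_add :: "'a::field \<Rightarrow> 'a \<Rightarrow> 'a \<Rightarrow> 'a ecpt \<Rightarrow> 'a ecpt \<Rightarrow> 'a ecpt" where
  "ec_add a2 a4 a6 P Q = (case P of None \<Rightarrow> Q | Some (x1, y1) \<Rightarrow>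
     (case Q of None \<Rightarrow> P | Some (x2, y2) \<Rightarrow>
       (if x1 = x2 \<and> y1 = - y2 then None
        else let l = (if x1 = x2 then (3 * x1^2 + 2 * a2 * x1 + a4) / (2 * y1)
                      else (y2 - y1) / (x2 - x1));
                 x3 = l^2 - a2 - x1 - x2;
                 y3 = l * (x1 - x3) - y1
             in Some (x3, y3))))"

fun ec_mul :: "'a::field \<Rightarrow> 'a \<Rightarrow> 'a \<Rightarrow> nat \<Rightarrow> 'a ecpt \<Rightarrow> 'a ecpt" where
  "ec_mul a2 a4 a6 0 P = None"
| "ec_mul a2 a4 a6 (Suc n) P = ec_add a2 a4 a6 P (ec_mul a2 a4 a6 n P)"

end

theory Submission
  imports Defs
begin

lemma gen:
  fixes s k :: "'a::field_char_0"
  assumes k: "k \<noteq> 0"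
  shows "ec_mul (s^2-1) (2*k*s) (k^2) 5 (Some (0,k)) = None \<longleftrightarrow> 4*k*(s+k) = 1"
proof -
  let ?m = "ec_mul (s^2-1) (2*k*s) (k^2)"
  let ?ad = "ec_add (s^2-1) (2*k*s) (k^2)"
  have kk: "k \<noteq> - k" using k by simp
  have P1: "?m 1 (Some (0,k)) = Some (0,k)" by (simp add: ec_add_def)
  have P2: "?m 2 (Some (0,k)) = Some (1, -s-k)"
  proof -
    have "?m 2 (Some (0,k)) = ?ad (Some (0,k)) (Some (0,k))"
      using P1 by (simp add: numeral_2_eq_2)
    also have "\<dots> = Some (1, -s-k)" using k kk by (simp add: ec_add_def Let_def power2_eq_square)
    finally show ?thesis .
  qed
  define u where "u = 4*k*(s+k)"
  have P3: "?m 3 (Some (0,k)) = Some (u, (s+2*k)*u - k)"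
  proof -
    have "?m 3 (Some (0,k)) = ?ad (Some (0,k)) (?m 2 (Some (0,k)))"
      by (simp add: numeral_3_eq_3 numeral_2_eq_2)
    also have "\<dots> = Some (u, (s+2*k)*u - k)" unfolding P2 u_def
      by (simp add: ec_add_def Let_def power2_eq_square algebra_simps)
    finally show ?thesis .
  qed
  have P5: "?m 5 (Some (0,k)) = ?ad (Some (0,k)) (?ad (Some (0,k)) (?m 3 (Some (0,k))))"
    by (simp add: eval_nat_numeral)
  show ?thesis
  proof (cases "u = 0")
    case True
    have "?ad (Some (0,k)) (?m 3 (Some (0,k))) = None"
      unfolding P3 True by (simp add: ec_add_def)
    hence "?m 5 (Some (0,k)) = Some (0,k)" using P5 by (simp add: ec_add_def)
    moreover have "4*k*(s+k) \<noteq> 1" by (metis True u_def zero_neq_one)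
    ultimately show ?thesis by simp
  next
    case False
    define l where "l = ((s+2*k)*u - k - k) / (u - 0)"
    define x4 where "x4 = l^2 - (s^2-1) - 0 - u"
    define y4 where "y4 = l * (0 - x4) - k"
    have P4: "?ad (Some (0,k)) (?m 3 (Some (0,k))) = Some (x4, y4)"
      unfolding P3 using False by (simp add: ec_add_def Let_def l_def x4_def y4_def) (simp add: algebra_simps minus_divide_left)
    have sk: "s + k \<noteq> 0" using False u_def by auto
    have x4e: "x4 = (1 - u) / (4*(s+k)^2)"
      unfolding x4_def l_def using False sk k unfolding u_def
      by (simp add: field_simps) (simp add: algebra_simps power2_eq_square)
    have "?m 5 (Some (0,k)) = None \<longleftrightarrow> x4 = 0"
      unfolding P5 P4 by (auto simp: ec_add_def Let_def y4_def)
    also have "\<dots> \<longleftrightarrow> u = 1" using sk by (simp add: x4e)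
    finally show ?thesis using u_def by simp
  qed
qed

theorem lemma1:
  fixes a r b c :: "'a::field_char_0"
  assumes "a \<noteq> 0"
    and "r \<notin> {-1, 1, 1 - a, -1 - a}"
    and "b = (r^2 - 1) / a"
    and "c = a + b + 2 * r"
    and "a * b \<noteq> b * c" and "a * b \<noteq> a * c" and "b * c \<noteq> a * c"
  shows "ec_mul (a*b + b*c + a*c) (a*b*(b*c) + a*b*(a*c) + b*c*(a*c)) (a*b*(b*c)*(a*c))
            5 (Some (0, a*b*c)) = None
     \<longleftrightarrow> (-4*r^2 + 4*r^4)*a^4 + (4*r - 20*r^3 + 16*r^5)*a^3
         + (-1 + 16*r^2 - 40*r^4 + 24*r^6)*a^2
         + (-4*r + 24*r^3 - 36*r^5 + 16*r^7)*a
         - 4*r^2 + 12*r^4 - 12*r^6 + 4*r^8 = 0"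
proof -
  define s where "s = a + b + r"
  define k where "k = a*b*c"
  have ab: "a*b = r^2 - 1" using assms(1,3) by simp
  have "r^2 - 1 = (r-1)*(r+1)" by (simp add: algebra_simps power2_eq_square)
  moreover have "r - 1 \<noteq> 0" using assms(2) by auto
  moreover have "r + 1 \<noteq> 0"
  proof
    assume "r + 1 = 0" then have "r = -1" by (metis add_diff_cancel_right' diff_0)
    then show False using assms(2) by auto
  qed
  ultimately have "r^2 - 1 \<noteq> 0" by simp
  hence b0: "b \<noteq> 0" using assms(1,3) by simp
  have "a*c = (a+r)^2 - 1" using ab assms(4) by (simp add: algebra_simps power2_eq_square)
  moreover have "(a+r)^2 - 1 = (a+r-1)*(a+r+1)" by (simp add: algebra_simps power2_eq_square)
  moreover have "a+r-1 \<noteq> 0" using assms(2) by (auto simp: algebra_simps)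
  moreover have "a+r+1 \<noteq> 0"
  proof
    assume "a+r+1 = 0" then have "r = -1 - a" by (metis add_diff_cancel_right' diff_0 add.commute diff_diff_eq)
    then show False using assms(2) by auto
  qed
  ultimately have "a*c \<noteq> 0" by simp
  hence k0: "k \<noteq> 0" using b0 assms(1) unfolding k_def by simp
  have e1: "a*b + b*c + a*c = s^2 - 1" unfolding s_def using ab assms(4)
    by (simp add: algebra_simps power2_eq_square)
  have e2: "a*b*(b*c) + a*b*(a*c) + b*c*(a*c) = 2*k*s" unfolding s_def k_def using assms(4)
    by (simp add: algebra_simps)
  have e3: "a*b*(b*c)*(a*c) = k^2" unfolding k_def by (simp add: algebra_simps power2_eq_square)
  have pe: "(-4*r^2 + 4*r^4)*a^4 + (4*r - 20*r^3 + 16*r^5)*a^3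
         + (-1 + 16*r^2 - 40*r^4 + 24*r^6)*a^2
         + (-4*r + 24*r^3 - 36*r^5 + 16*r^7)*a
         - 4*r^2 + 12*r^4 - 12*r^6 + 4*r^8 = a^2 * (4*k*(s+k) - 1)"
    unfolding s_def k_def assms(4) assms(3) using assms(1)
    by (simp add: field_simps) (simp add: algebra_simps power2_eq_square power3_eq_cube eval_nat_numeral)
  show ?thesis unfolding e1 e2 e3 k_def[symmetric] gen[OF k0] pe using assms(1) by simp
qed

end
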